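(* Let $0<c<1$, $\beta_1,\dots,\beta_p>0$ with $\beta_i-\beta_j\notin\mathbb Z$ for $i\ne j$, $\vec n\in\mathbb N_0^p$, and $i\in\{1,\dots,p\}$ with $n_i\ge1$. The type I multiple Meixner polynomials of the second kind are $$M^{(i)}_{2:\vec n}(x;\vec\beta,c)=\frac{(-1)^{|\vec n|-1}(1-c)^{\beta_i+|\vec n|-1}}{c^{|\vec n|-1}(n_i-1)!\prod_{k\ne i}(\beta_k-\beta_i)_{n_k}}\;{}_{p+1}F_p\!\left(\begin{matrix}-n_i+1,\ \{\beta_i+1-\beta_k-n_k\}_{k\ne i},\ x+\beta_i\\ \{\beta_i+1-\beta_k\}_{k\ne i},\ \beta_i\end{matrix};1-c\right).$$
   Context: $(a)_m$ is the Pochhammer symbol; ${}_{p+1}F_p(a_1,\dots,a_{p+1};b_1,\dots,b_p;z)=\sum_{l\ge0}\frac{\prod(a_r)_l}{\prod(b_r)_l}\frac{z^l}{l!}$ (here terminating). Weights $w_i(x)=\frac{\Gamma(\beta_i+x)}{\Gamma(\beta_i)\Gamma(x+1)}c^x$ on $\mathbb N_0$. The type I polynomials $A^{(1)},\dots,A^{(p)}$ for $\vec n$ satisfy $\deg A^{(i)}\le n_i-1$ (zero if $n_i=0$) and $\sum_{i=1}^p\sum_{k\ge0}k^jA^{(i)}(k)w_i(k)=0$ for $0\le j\le|\vec n|-2$, $=1$ for $j=|\vec n|-1$; they exist and are unique. *)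

theory Defs
  imports "HOL-Analysis.Analysis" "HOL-Computational_Algebra.Polynomial"
begin

definition mindex_size :: "nat \<Rightarrow> (nat \<Rightarrow> nat) \<Rightarrow> nat" where
  "mindex_size p n = (\<Sum>k\<in>{1..p}. n k)"

definition meixner_weight :: "real \<Rightarrow> real \<Rightarrow> nat \<Rightarrow> real" where
  "meixner_weight b c x = Gamma (b + real x) / (Gamma b * Gamma (real x + 1)) * c ^ x"

definition is_typeI :: "nat \<Rightarrow> (nat \<Rightarrow> real) \<Rightarrow> real \<Rightarrow> (nat \<Rightarrow> nat) \<Rightarrow> (nat \<Rightarrow> real poly) \<Rightarrow> bool" where
  "is_typeI p \<beta> c n A \<longleftrightarrow>
     (\<forall>i\<in>{1..p}. (n i = 0 \<longrightarrow> A i = 0) \<and> (0 < n i \<longrightarrow> degree (A i) \<le> n i - 1)) \<and>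
     (\<forall>j < mindex_size p n.
        (\<Sum>i\<in>{1..p}. \<Sum>k. real k ^ j * poly (A i) (real k) * meixner_weight (\<beta> i) c k)
          = (if j = mindex_size p n - 1 then 1 else 0))"

definition hypergeomF :: "real list \<Rightarrow> real list \<Rightarrow> real \<Rightarrow> real" where
  "hypergeomF as bs z =
     (\<Sum>l. (\<Prod>a\<leftarrow>as. pochhammer a l) / (\<Prod>b\<leftarrow>bs. pochhammer b l) * z ^ l / fact l)"

definition meixner2_typeI :: "nat \<Rightarrow> (nat \<Rightarrow> real) \<Rightarrow> real \<Rightarrow> (nat \<Rightarrow> nat) \<Rightarrow> nat \<Rightarrow> real \<Rightarrow> real" where
  "meixner2_typeI p \<beta> c n i x =
     (let N = mindex_size p n; ks = filter (\<lambda>k. k \<noteq> i) [1..<p+1] in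
      (-1) ^ (N - 1) * (1 - c) powr (\<beta> i + real N - 1)
      / (c ^ (N - 1) * fact (n i - 1) * (\<Prod>k\<in>{1..p} - {i}. pochhammer (\<beta> k - \<beta> i) (n k)))
      * hypergeomF
          ([1 - real (n i)] @ map (\<lambda>k. \<beta> i + 1 - \<beta> k - real (n k)) ks @ [x + \<beta> i])
          (map (\<lambda>k. \<beta> i + 1 - \<beta> k) ks @ [\<beta> i])
          (1 - c))"

end

theory Submission
  imports Defs
begin

definition wp :: "real \<Rightarrow> real \<Rightarrow> nat \<Rightarrow> real" where
  "wp g c k = pochhammer g k / fact k * c ^ k"
definition ffp :: "nat \<Rightarrow> real poly" where "ffp j = (\<Prod>m<j. [:- real m, 1:])"
definition rfp :: "real \<Rightarrow> nat \<Rightarrow> real poly" where "rfp b r = (\<Prod>m<r. [:b + real m, 1:])"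

lemma monic_prod_lin:
  fixes f :: "nat \<Rightarrow> real"
  shows "degree (\<Prod>m<j. [:f m, 1:]) = j \<and> coeff (\<Prod>m<j. [:f m, 1:]) j = 1"
proof (induction j)
  case 0 then show ?case by simp
next
  case (Suc j)
  let ?P = "\<Prod>m<j. [:f m, 1:]"
  have nz: "?P \<noteq> 0" using Suc by auto
  have "degree (?P * [:f j, 1:]) = Suc j" using Suc nz by (subst degree_mult_eq) auto
  moreover have "coeff (?P * [:f j, 1:]) (Suc j) = 1"
    using Suc coeff_mult_degree_sum[of ?P "[:f j, 1:]"] by simp
  ultimately show ?case by simp
qed

lemma ffp_deg: "degree (ffp j) = j" and ffp_lead: "coeff (ffp j) j = 1"
  using monic_prod_lin[of "\<lambda>m. - real m" j] by (auto simp: ffp_def)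
lemma rfp_deg: "degree (rfp b j) = j" and rfp_lead: "coeff (rfp b j) j = 1"
  using monic_prod_lin[of "\<lambda>m. b + real m" j] by (auto simp: rfp_def)

lemma poly_rfp: "poly (rfp b r) x = pochhammer (x + b) r"
  by (simp add: rfp_def poly_prod pochhammer_prod atLeast0LessThan algebra_simps)

lemma poly_ffp_Suc: "ffp (Suc j) = ffp j * [:- real j, 1:]"
  by (simp add: ffp_def)

lemma poly_ffp_shift: "poly (ffp j) (real (m + j)) * fact m = fact (m + j)"
proof (induction j arbitrary: m)
  case 0 then show ?case by (simp add: ffp_def)
next
  case (Suc j)
  have "poly (ffp (Suc j)) (real (m + Suc j)) * fact m
        = poly (ffp j) (real (Suc m + j)) * (real m + 1) * fact m"
    by (simp add: poly_ffp_Suc algebra_simps)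
  also have "\<dots> = poly (ffp j) (real (Suc m + j)) * fact (Suc m)" by (simp add: algebra_simps)
  also have "\<dots> = fact (Suc m + j)" by (rule Suc.IH)
  finally show ?case by simp
qed

lemma poly_ffp_small: "k < j \<Longrightarrow> poly (ffp j) (real k) = 0"
  unfolding ffp_def poly_prod by (rule prod_zero) (auto intro!: bexI[of _ k])

lemma basis_exp:
  fixes P :: "nat \<Rightarrow> real poly"
  assumes P: "\<And>j. degree (P j) = j" "\<And>j. coeff (P j) j = 1"
  shows "degree q \<le> N \<Longrightarrow> \<exists>\<alpha>. q = (\<Sum>j\<le>N. smult (\<alpha> j) (P j)) \<and> \<alpha> N = coeff q N"
proof (induction N arbitrary: q)
  case 0
  have "P 0 = 1" using P[of 0] by (metis degree_0_id one_pCons)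
  moreover have "q = [:coeff q 0:]" using 0 by (metis degree_0_id le_zero_eq)
  ultimately show ?case by (intro exI[of _ "\<lambda>_. coeff q 0"]) (auto simp: smult_one)
next
  case (Suc N)
  define q' where "q' = q - smult (coeff q (Suc N)) (P (Suc N))"
  have d1: "degree q' \<le> Suc N" unfolding q'_def using Suc.prems P
    by (metis degree_diff_le degree_smult_le le_trans)
  have c1: "coeff q' (Suc N) = 0" unfolding q'_def using P by simp
  have "degree q' \<le> N"
  proof (rule ccontr)
    assume a0: "\<not> degree q' \<le> N"
    hence "degree q' = Suc N" using d1 by simp
    with c1 have "q' = 0" by (metis leading_coeff_0_iff)
    with a0 show False by simp
  qed
  then obtain \<alpha> where \<alpha>: "q' = (\<Sum>j\<le>N. smult (\<alpha> j) (P j))" using Suc.IH by blast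
  define \<alpha>' where "\<alpha>' = \<alpha>(Suc N := coeff q (Suc N))"
  have "(\<Sum>j\<le>N. smult (\<alpha>' j) (P j)) = (\<Sum>j\<le>N. smult (\<alpha> j) (P j))"
    by (intro sum.cong) (auto simp: \<alpha>'_def)
  hence "q = (\<Sum>j\<le>Suc N. smult (\<alpha>' j) (P j))"
    using \<alpha> by (simp add: q'_def \<alpha>'_def algebra_simps)
  then show ?case by (intro exI[of _ \<alpha>']) (simp add: \<alpha>'_def)
qed


lemma wp_sums:
  assumes "0 < c" "c < 1"
  shows "wp g c sums ((1 - c) powr (- g))"
proof -
  have "\<bar>-c\<bar> < 1" using assms by simp
  from gen_binomial_real[OF this, of "-g"]
  have "(\<lambda>n. ((-g) gchoose n) * (-c)^n) sums (1 - c) powr (-g)" by simp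
  moreover have "(\<lambda>n. ((-g) gchoose n) * (-c)^n) = wp g c"
  proof
    fix n
    have "((-g) gchoose n) * (-c)^n = (-1)^n * (-1)^n * pochhammer g n / fact n * c^n"
      by (simp add: gbinomial_pochhammer power_minus[of c])
    also have "(-1::real)^n * (-1)^n = 1" by (simp flip: power_add)
    finally show "((-g) gchoose n) * (-c)^n = wp g c n" by (simp add: wp_def)
  qed
  ultimately show ?thesis by simp
qed

lemma ff_sums:
  assumes "0 < c" "c < 1"
  shows "(\<lambda>k. poly (ffp j) (real k) * wp g c k) sums (pochhammer g j * c^j * (1 - c) powr (-(g + j)))"
proof -
  let ?f = "\<lambda>k. poly (ffp j) (real k) * wp g c k"
  have sh: "?f (m + j) = pochhammer g j * c^j * wp (g + j) c m" for m
  proof -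
    have fm: "poly (ffp j) (real (m + j)) = fact (m + j) / fact m"
      using poly_ffp_shift[of j m] by (simp add: field_simps)
    have "pochhammer g (m + j) = pochhammer g j * pochhammer (g + j) m"
      using pochhammer_product'[of g j m] by (simp add: add.commute)
    thus ?thesis using fm by (simp add: wp_def power_add field_simps)
  qed
  have "(\<lambda>m. pochhammer g j * c^j * wp (g + j) c m) sums (pochhammer g j * c^j * (1 - c) powr (-(g + j)))"
    by (intro sums_mult wp_sums assms)
  hence "(\<lambda>m. ?f (m + j)) sums (pochhammer g j * c^j * (1 - c) powr (-(g + j)))"
    by (simp only: sh)
  hence "?f sums (pochhammer g j * c^j * (1 - c) powr (-(g + j)) + (\<Sum>i<j. ?f i))"
    by (rule iffD1[OF sums_iff_shift])
  moreover have "(\<Sum>i<j. ?f i) = 0" by (simp add: poly_ffp_small)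
  ultimately show ?thesis by simp
qed

lemma summable_poly_w:
  assumes "0 < c" "c < 1"
  shows "summable (\<lambda>k. poly q (real k) * wp g c k)"
proof -
  obtain \<alpha> where \<alpha>: "q = (\<Sum>j\<le>degree q. smult (\<alpha> j) (ffp j))"
    using basis_exp[where P=ffp and N="degree q" and q=q] ffp_deg ffp_lead by blast
  have e: "(\<lambda>k. poly q (real k) * wp g c k) = (\<lambda>k. \<Sum>j\<le>degree q. \<alpha> j * (poly (ffp j) (real k) * wp g c k))"
    by (subst \<alpha>) (simp add: poly_sum sum_distrib_right sum_distrib_left mult_ac)
  have "summable (\<lambda>k. \<Sum>j\<le>degree q. \<alpha> j * (poly (ffp j) (real k) * wp g c k))"
    using ff_sums[OF assms] by (intro summable_sum summable_mult) (auto simp: sums_iff)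
  thus ?thesis by (subst e)
qed

lemma rf_w: "poly (rfp b r) (real k) * wp b c k = pochhammer b r * wp (b + r) c k"
proof -
  have "pochhammer (real k + b) r * pochhammer b k = pochhammer b r * pochhammer (b + r) k"
    using pochhammer_product'[of b k r] pochhammer_product'[of b r k] by (simp add: add.commute mult.commute)
  thus ?thesis by (simp add: poly_rfp wp_def)
qed

lemma ffrf_sums:
  assumes "0 < c" "c < 1"
  shows "(\<lambda>k. poly (ffp j) (real k) * poly (rfp b r) (real k) * wp b c k) sums
           (pochhammer b r * (pochhammer (b + r) j * c^j * (1 - c) powr (-(b + r + j))))"
proof -
  have "(\<lambda>k. pochhammer b r * (poly (ffp j) (real k) * wp (b + r) c k)) sums
           (pochhammer b r * (pochhammer (b + r) j * c^j * (1 - c) powr (-(b + r + j))))"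
    by (intro sums_mult ff_sums assms)
  thus ?thesis by (simp add: mult.assoc rf_w mult.left_commute)
qed

lemma weight_eq:
  assumes "0 < b"
  shows "meixner_weight b c k = wp b c k"
proof -
  have "b \<notin> \<int>\<^sub>\<le>\<^sub>0" using assms nonpos_Ints_nonpos by fastforce
  hence "pochhammer b k = Gamma (b + real k) / Gamma b" by (simp add: pochhammer_Gamma)
  moreover have "Gamma (real k + 1) = fact k" using Gamma_fact[of k] by (simp add: add.commute)
  ultimately show ?thesis by (simp add: meixner_weight_def wp_def)
qed


lemma node_solve:
  fixes T :: "'a set" and s d :: "'a \<Rightarrow> real"
  assumes fin: "finite T" and card: "card T = Suc M"
    and sys: "\<And>j. j \<le> M \<Longrightarrow> (\<Sum>t\<in>T. d t * pochhammer (s t) j) = (if j = M then K else 0)"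
    and tz: "tz \<in> T" and inj: "\<And>t. t \<in> T \<Longrightarrow> t \<noteq> tz \<Longrightarrow> s t \<noteq> s tz"
  shows "d tz * (\<Prod>t\<in>T-{tz}. s tz - s t) = K"
proof -
  have F: "(\<Sum>t\<in>T. d t * poly q (s t)) = K * coeff q M" if dq: "degree q \<le> M" for q
  proof -
    obtain \<alpha> where \<alpha>: "q = (\<Sum>j\<le>M. smult (\<alpha> j) (rfp 0 j))" "\<alpha> M = coeff q M"
      using basis_exp[where P="rfp 0" and N=M and q=q] rfp_deg rfp_lead dq by blast
    have "(\<Sum>t\<in>T. d t * poly q (s t)) = (\<Sum>t\<in>T. \<Sum>j\<le>M. \<alpha> j * (d t * pochhammer (s t) j))"
      by (subst \<alpha>(1)) (simp add: poly_sum poly_rfp sum_distrib_left mult_ac)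
    also have "\<dots> = (\<Sum>j\<le>M. \<alpha> j * (\<Sum>t\<in>T. d t * pochhammer (s t) j))"
      by (subst sum.swap) (simp add: sum_distrib_left)
    also have "\<dots> = (\<Sum>j\<le>M. \<alpha> j * (if j = M then K else 0))"
      by (intro sum.cong refl) (simp add: sys)
    also have "\<dots> = \<alpha> M * K" by (simp add: if_distrib sum.delta cong: if_cong)
    finally show ?thesis using \<alpha>(2) by simp
  qed
  define q0 where "q0 = (\<Prod>t\<in>T-{tz}. [:- s t, 1:])"
  have cT: "card (T - {tz}) = M" using card tz fin by simp
  have dq0: "degree q0 = M" unfolding q0_def
    by (subst degree_prod_eq_sum_degree) (auto simp: cT)
  have lq0: "coeff q0 M = 1" using dq0 lead_coeff_prod[of "\<lambda>t. [:- s t, 1:]" "T-{tz}"]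
    by (simp add: q0_def)
  have pq0: "poly q0 x = (\<Prod>t\<in>T-{tz}. x - s t)" for x by (simp add: q0_def poly_prod)
  have z: "poly q0 (s t) = 0" if "t \<in> T - {tz}" for t
    unfolding pq0 using that fin by (intro prod_zero) auto
  have "(\<Sum>t\<in>T. d t * poly q0 (s t)) = d tz * poly q0 (s tz) + (\<Sum>t\<in>T-{tz}. d t * poly q0 (s t))"
    using fin tz by (simp add: sum.remove)
  also have "(\<Sum>t\<in>T-{tz}. d t * poly q0 (s t)) = 0" using z by simp
  finally have "d tz * poly q0 (s tz) = K" using F[of q0] dq0 lq0 by simp
  thus ?thesis by (simp add: pq0)
qed


lemma prod_below: "(\<Prod>r'<r. real r - real r') = fact r"
proof -
  have "(\<Prod>r'<r. real r - real r') = (\<Prod>i<r. (\<lambda>m. real m + 1) (r - Suc i))"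
    by (intro prod.cong refl) (auto simp: of_nat_diff)
  also have "\<dots> = (\<Prod>m<r. real m + 1)" by (rule prod.nat_diff_reindex)
  also have "\<dots> = fact r" by (simp add: fact_prod_Suc atLeast0LessThan of_nat_prod add.commute)
  finally show ?thesis .
qed

lemma prod_excl: "r \<le> m \<Longrightarrow> (\<Prod>r'\<in>{..<Suc m}-{r}. real r - real r') = (-1)^(m-r) * fact r * fact (m - r)"
proof (induction m)
  case 0 then show ?case by simp
next
  case (Suc m)
  show ?case
  proof (cases "r = Suc m")
    case True
    have "{..<Suc (Suc m)} - {r} = {..<r}" using True by auto
    then show ?thesis using True prod_below[of r] by simp
  next
    case False
    hence r: "r \<le> m" using Suc.prems by simp
    have "{..<Suc (Suc m)} - {r} = insert (Suc m) ({..<Suc m} - {r})" using r by auto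
    hence "(\<Prod>r'\<in>{..<Suc (Suc m)}-{r}. real r - real r') =
           (real r - real (Suc m)) * (\<Prod>r'\<in>{..<Suc m}-{r}. real r - real r')" by simp
    also have "\<dots> = (real r - real (Suc m)) * ((-1)^(m-r) * fact r * fact (m - r))"
      using Suc.IH r by simp
    also have "\<dots> = (-1)^(Suc m - r) * fact r * fact (Suc m - r)"
      using r by (simp add: Suc_diff_le fact_Suc of_nat_diff algebra_simps)
    finally show ?thesis .
  qed
qed

lemma poch_nat_fact: "pochhammer (real m + 1) r * fact m = fact (m + r)"
proof (induction r)
  case 0 then show ?case by simp
next
  case (Suc r)
  have "pochhammer (real m + 1) (Suc r) * fact m = (pochhammer (real m + 1) r * fact m) * (real m + 1 + real r)"
    by (simp add: pochhammer_Suc algebra_simps)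
  also have "\<dots> = fact (m + Suc r)" using Suc.IH by (simp add: algebra_simps)
  finally show ?case .
qed

lemma G1_identity:
  assumes "r < n"
  shows "(\<Prod>r'\<in>{..<n}-{r}. real r - real r') * pochhammer (1 - real n) r * (-1)^(n-1) = fact (n-1) * fact r"
proof -
  obtain m where n: "n = Suc m" using assms by (cases n) auto
  have r: "r \<le> m" using assms n by simp
  have "pochhammer (1 - real n) r = pochhammer (- real m) r" using n by simp
  also have "\<dots> = (-1)^r * pochhammer (real (m - r) + 1) r"
    using r by (simp add: pochhammer_minus of_nat_diff)
  finally have p: "pochhammer (1 - real n) r * fact (m - r) = (-1)^r * fact m"
    using poch_nat_fact[of "m - r" r] r by simp
  have "(\<Prod>r'\<in>{..<n}-{r}. real r - real r') * pochhammer (1 - real n) r * (-1)^(n-1) * fact (m - r)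
        = ((-1)^(m-r) * fact r * fact (m - r)) * ((-1)^r * fact m) * (-1)^m"
    using prod_excl[OF r] p n by (simp add: mult_ac)
  also have "\<dots> = ((-1)^(m-r+r+m)) * fact r * fact m * fact (m - r)" by (simp add: power_add)
  also have "(-1::real)^(m-r+r+m) = 1" using r by (simp add: power_add flip: mult_2)
  finally show ?thesis using n by simp
qed

lemma Gk_identity:
  fixes b :: real
  shows "(\<Prod>m<n. b + real r - real m) * pochhammer (b + 1 - real n) r * (-1)^n
          = pochhammer (-b) n * pochhammer (b + 1) r"
proof -
  have rev: "(\<Prod>m<n. b + real r - real m) = pochhammer (b + 1 - real n + real r) n"
  proof -
    have "pochhammer (b + 1 - real n + real r) n = (\<Prod>i<n. b + 1 - real n + real r + real i)"
      by (simp add: pochhammer_prod atLeast0LessThan)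
    also have "\<dots> = (\<Prod>i<n. (\<lambda>m. b + real r - real m) (n - Suc i))"
      by (intro prod.cong refl) (auto simp: of_nat_diff)
    also have "\<dots> = (\<Prod>m<n. b + real r - real m)" by (rule prod.nat_diff_reindex)
    finally show ?thesis by simp
  qed
  have "pochhammer (b + 1 - real n) r * pochhammer (b + 1 - real n + real r) n
        = pochhammer (b + 1 - real n) (r + n)" by (simp add: pochhammer_product')
  also have "\<dots> = pochhammer (b + 1 - real n) n * pochhammer (b + 1) r"
    by (subst add.commute) (simp add: pochhammer_product')
  also have "pochhammer (b + 1 - real n) n = (-1)^n * pochhammer (-b) n"
    using pochhammer_minus'[of b n] by (simp add: algebra_simps)
  finally have "pochhammer (b + 1 - real n) r * pochhammer (b + 1 - real n + real r) n
        = (-1)^n * pochhammer (-b) n * pochhammer (b + 1) r" .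
  hence "(\<Prod>m<n. b + real r - real m) * pochhammer (b + 1 - real n) r * (-1)^n
        = ((-1)^n * (-1)^n) * pochhammer (-b) n * pochhammer (b + 1) r"
    by (simp add: rev mult_ac)
  also have "((-1::real)^n * (-1)^n) = 1" by (simp flip: power_add mult_2)
  finally show ?thesis by simp
qed


lemma final_alg:
  fixes a d K G P1 PR PQ PS pb fn fr X c u :: real and M r :: nat
  assumes hd: "d * G = K" and ha: "a = d * (u * (1-c)^r) / pb" and hK: "K = ((1-c)/c)^M"
   and hG: "G * ((-1)^M * P1 * PR) = fn * fr * PQ * PS"
   and nz: "pb \<noteq> 0" "fn \<noteq> 0" "fr \<noteq> 0" "PQ \<noteq> 0" "PS \<noteq> 0" "0 < c" "c < 1"
  shows "a * X = (-1)^M * (u * (1-c)^M) / (c^M * fn * PQ) * (P1 * PR * X / (PS * pb) * (1-c)^r / fr)"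
proof -
  have K0: "K \<noteq> 0" using hK nz by simp
  hence G0: "G \<noteq> 0" using hd by auto
  have e: "(-1)^M * P1 * PR = fn * fr * PQ * PS / G" using hG G0 by (simp add: field_simps)
  have "(-1)^M * (u * (1-c)^M) / (c^M * fn * PQ) * (P1 * PR * X / (PS * pb) * (1-c)^r / fr)
      = ((-1)^M * P1 * PR) * (u * (1-c)^M * X * (1-c)^r) / (c^M * fn * PQ * PS * pb * fr)"
    by (simp add: field_simps)
  also have "\<dots> = (1-c)^M / c^M * u * X * (1-c)^r / (G * pb)"
    unfolding e using nz G0 by (simp add: field_simps)
  also have "\<dots> = a * X" using ha hd[symmetric] hK G0 nz by (simp add: field_simps power_divide)
  finally show ?thesis by simp
qed


theorem mainTheorem5:
  fixes p :: nat and \<beta> :: "nat \<Rightarrow> real" and c :: real and n :: "nat \<Rightarrow> nat"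
    and i :: nat and A :: "nat \<Rightarrow> real poly"
  assumes "0 < c" "c < 1"
    and "\<And>k. k \<in> {1..p} \<Longrightarrow> 0 < \<beta> k"
    and "\<And>k l. k \<in> {1..p} \<Longrightarrow> l \<in> {1..p} \<Longrightarrow> k \<noteq> l \<Longrightarrow> \<beta> k - \<beta> l \<notin> \<int>"
    and "i \<in> {1..p}" "1 \<le> n i"
    and "is_typeI p \<beta> c n A"
  shows "\<forall>x::real. poly (A i) x = meixner2_typeI p \<beta> c n i x"
proof -
  note c0 = assms(1) and c1 = assms(2) and bpos = assms(3) and bint = assms(4)
    and iI = assms(5) and ni = assms(6) and tI = assms(7)
  define I where "I = {1..p}"
  define N where "N = mindex_size p n"
  have finI: "finite I" by (simp add: I_def)
  have NI: "N = (\<Sum>k\<in>I. n k)" by (simp add: N_def I_def mindex_size_def)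
  have iI': "i \<in> I" using iI by (simp add: I_def)
  have niN: "n i \<le> N" unfolding NI using finI iI' by (intro member_le_sum) auto
  hence N1: "1 \<le> N" using ni by simp
  have w: "\<And>k x. k \<in> I \<Longrightarrow> meixner_weight (\<beta> k) c x = wp (\<beta> k) c x"
    using weight_eq bpos by (simp add: I_def)
  have deg: "\<And>k. k \<in> I \<Longrightarrow> (n k = 0 \<longrightarrow> A k = 0) \<and> (0 < n k \<longrightarrow> degree (A k) \<le> n k - 1)"
    using tI by (simp add: is_typeI_def I_def)
  have cond0: "\<And>j. j < N \<Longrightarrow> (\<Sum>k\<in>I. \<Sum>x. real x ^ j * poly (A k) (real x) * meixner_weight (\<beta> k) c x)
          = (if j = N - 1 then 1 else 0)"
    using tI by (simp add: is_typeI_def I_def N_def)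
  have cond: "\<And>j. j < N \<Longrightarrow> (\<Sum>k\<in>I. \<Sum>x. real x ^ j * poly (A k) (real x) * wp (\<beta> k) c x)
          = (if j = N - 1 then 1 else 0)"
  proof -
    fix j assume j: "j < N"
    have "(\<Sum>k\<in>I. \<Sum>x. real x ^ j * poly (A k) (real x) * wp (\<beta> k) c x)
        = (\<Sum>k\<in>I. \<Sum>x. real x ^ j * poly (A k) (real x) * meixner_weight (\<beta> k) c x)"
      by (intro sum.cong refl arg_cong[where f=suminf] ext) (simp add: w)
    thus "(\<Sum>k\<in>I. \<Sum>x. real x ^ j * poly (A k) (real x) * wp (\<beta> k) c x)
          = (if j = N - 1 then 1 else 0)" using cond0[OF j] by simp
  qed
  have "\<forall>k\<in>I. \<exists>\<alpha>. A k = (\<Sum>r<n k. smult (\<alpha> r) (rfp (\<beta> k) r))"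
  proof
    fix k assume k: "k \<in> I"
    show "\<exists>\<alpha>. A k = (\<Sum>r<n k. smult (\<alpha> r) (rfp (\<beta> k) r))"
    proof (cases "n k = 0")
      case True then show ?thesis using deg[OF k] by simp
    next
      case False
      then obtain \<alpha> where "A k = (\<Sum>r\<le>n k - 1. smult (\<alpha> r) (rfp (\<beta> k) r))"
        using basis_exp[where P="rfp (\<beta> k)" and N="n k - 1" and q="A k"] rfp_deg rfp_lead deg[OF k] by auto
      moreover have "{..n k - 1} = {..<n k}" using False by auto
      ultimately show ?thesis by auto
    qed
  qed
  from bchoice[OF this] obtain a where a: "\<And>k. k \<in> I \<Longrightarrow> A k = (\<Sum>r<n k. smult (a k r) (rfp (\<beta> k) r))"
    by blast
  have summ: "\<And>k m. summable (\<lambda>x. real x ^ m * poly (A k) (real x) * wp (\<beta> k) c x)"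
  proof -
    fix k m
    have "(\<lambda>x. real x ^ m * poly (A k) (real x) * wp (\<beta> k) c x) = (\<lambda>x. poly (monom 1 m * A k) (real x) * wp (\<beta> k) c x)"
      by (simp add: poly_monom)
    thus "summable (\<lambda>x. real x ^ m * poly (A k) (real x) * wp (\<beta> k) c x)"
      using summable_poly_w[OF c0 c1, of "monom 1 m * A k" "\<beta> k"] by (simp only: poly_mult)
  qed
  have C: "(\<Sum>k\<in>I. \<Sum>x. poly (ffp j) (real x) * poly (A k) (real x) * wp (\<beta> k) c x) = (if j = N - 1 then 1 else 0)"
    if j: "j < N" for j
  proof -
    have pf: "poly (ffp j) y = (\<Sum>m\<le>j. coeff (ffp j) m * y ^ m)" for y
      by (simp add: poly_altdef ffp_deg)
    have e1: "(\<Sum>x. poly (ffp j) (real x) * poly (A k) (real x) * wp (\<beta> k) c x)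
        = (\<Sum>m\<le>j. coeff (ffp j) m * (\<Sum>x. real x ^ m * poly (A k) (real x) * wp (\<beta> k) c x))" for k
    proof -
      have "(\<Sum>x. poly (ffp j) (real x) * poly (A k) (real x) * wp (\<beta> k) c x)
          = (\<Sum>x. \<Sum>m\<le>j. coeff (ffp j) m * (real x ^ m * poly (A k) (real x) * wp (\<beta> k) c x))"
        by (simp add: pf sum_distrib_right sum_distrib_left mult_ac)
      also have "\<dots> = (\<Sum>m\<le>j. suminf (\<lambda>x. coeff (ffp j) m * (real x ^ m * poly (A k) (real x) * wp (\<beta> k) c x)))"
        by (rule suminf_sum) (intro summable_mult summ)
      also have "\<dots> = (\<Sum>m\<le>j. coeff (ffp j) m * (\<Sum>x. real x ^ m * poly (A k) (real x) * wp (\<beta> k) c x))"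
        by (intro sum.cong refl suminf_mult summ)
      finally show ?thesis .
    qed
    have "(\<Sum>k\<in>I. \<Sum>x. poly (ffp j) (real x) * poly (A k) (real x) * wp (\<beta> k) c x)
        = (\<Sum>m\<le>j. coeff (ffp j) m * (\<Sum>k\<in>I. \<Sum>x. real x ^ m * poly (A k) (real x) * wp (\<beta> k) c x))"
      by (simp add: e1 sum_distrib_left) (rule sum.swap)
    also have "\<dots> = (\<Sum>m\<le>j. coeff (ffp j) m * (if m = N - 1 then 1 else 0))"
      using j by (intro sum.cong refl) (simp add: cond)
    also have "\<dots> = (if j = N - 1 then 1 else 0)"
    proof (cases "j = N - 1")
      case True
      then show ?thesis by (simp add: if_distrib sum.delta ffp_lead cong: if_cong)
    next
      case False
      hence "\<And>m. m \<le> j \<Longrightarrow> m \<noteq> N - 1" using j by auto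
      then show ?thesis using False by simp
    qed
    finally show ?thesis .
  qed
  have D: "(\<lambda>x. poly (ffp j) (real x) * poly (A k) (real x) * wp (\<beta> k) c x) sums
     (\<Sum>r<n k. a k r * (pochhammer (\<beta> k) r * (pochhammer (\<beta> k + r) j * c^j * (1-c) powr (-(\<beta> k + r + j)))))"
    if k: "k \<in> I" for k j
  proof -
    have "(\<lambda>x. poly (ffp j) (real x) * poly (A k) (real x) * wp (\<beta> k) c x)
        = (\<lambda>x. \<Sum>r<n k. a k r * (poly (ffp j) (real x) * poly (rfp (\<beta> k) r) (real x) * wp (\<beta> k) c x))"
      by (subst a[OF k]) (simp add: poly_sum sum_distrib_left sum_distrib_right mult_ac)
    moreover have "(\<lambda>x. \<Sum>r<n k. a k r * (poly (ffp j) (real x) * poly (rfp (\<beta> k) r) (real x) * wp (\<beta> k) c x))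
      sums (\<Sum>r<n k. a k r * (pochhammer (\<beta> k) r * (pochhammer (\<beta> k + r) j * c^j * (1-c) powr (-(\<beta> k + r + j)))))"
      by (intro sums_sum sums_mult ffrf_sums c0 c1)
    ultimately show ?thesis by simp
  qed
  define K where "K = ((1-c)/c)^(N-1)"
  define d where "d k r = a k r * pochhammer (\<beta> k) r * (1-c) powr (-(\<beta> k + r))" for k r
  have E: "(\<Sum>k\<in>I. \<Sum>r<n k. d k r * pochhammer (\<beta> k + real r) j) = (if j = N - 1 then K else 0)"
    if j: "j < N" for j
  proof -
    have "(\<Sum>k\<in>I. \<Sum>r<n k. a k r * (pochhammer (\<beta> k) r * (pochhammer (\<beta> k + r) j * c^j * (1-c) powr (-(\<beta> k + r + j)))))
        = (if j = N - 1 then 1 else 0)"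
    proof -
      have "(\<Sum>k\<in>I. \<Sum>x. poly (ffp j) (real x) * poly (A k) (real x) * wp (\<beta> k) c x)
         = (\<Sum>k\<in>I. \<Sum>r<n k. a k r * (pochhammer (\<beta> k) r * (pochhammer (\<beta> k + r) j * c^j * (1-c) powr (-(\<beta> k + r + j)))))"
        by (intro sum.cong refl) (rule sums_unique[symmetric], rule D)
      thus ?thesis using C[OF j] by simp
    qed
    moreover have eqt: "a k r * (pochhammer (\<beta> k) r * (pochhammer (\<beta> k + r) j * c^j * (1-c) powr (-(\<beta> k + r + j))))
        = (c / (1 - c))^j * (d k r * pochhammer (\<beta> k + real r) j)" for k r
    proof -
      have c1': "0 < 1 - c" using c1 by simp
      have "(1-c) powr (-(\<beta> k + r + j)) = (1-c) powr (-(\<beta> k + r) + (- real j))"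
        by (simp add: algebra_simps)
      also have "\<dots> = (1-c) powr (-(\<beta> k + r)) * (1-c) powr (- real j)" by (rule powr_add)
      also have "(1-c) powr (- real j) = inverse ((1-c) powr real j)" by (rule powr_minus)
      also have "(1-c) powr real j = (1-c)^j" using c1' by (rule powr_realpow)
      finally have "(1-c) powr (-(\<beta> k + r + j)) = (1-c) powr (-(\<beta> k + r)) / (1-c)^j"
        by (simp add: divide_inverse)
      thus ?thesis by (simp add: d_def power_divide)
    qed
    ultimately have "(c / (1 - c))^j * (\<Sum>k\<in>I. \<Sum>r<n k. d k r * pochhammer (\<beta> k + real r) j) = (if j = N - 1 then 1 else 0)"
      by (simp only: eqt sum_distrib_left)
    moreover have "(c / (1 - c))^j \<noteq> 0" using c0 c1 by simp
    ultimately show ?thesis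
      by (cases "j = N - 1") (auto simp: K_def field_simps power_divide)
  qed
  define T where "T = Sigma I (\<lambda>k. {..<n k})"
  define s where "s t = \<beta> (fst t) + real (snd t)" for t
  have hd: "d i r * (\<Prod>t\<in>T-{(i,r)}. s (i,r) - s t) = K" if r: "r < n i" for r
  proof -
    have finT: "finite T" using finI by (simp add: T_def)
    have cardT: "card T = Suc (N - 1)" using finI N1 by (simp add: T_def NI)
    have sysT: "(\<Sum>t\<in>T. d (fst t) (snd t) * pochhammer (s t) j) = (if j = N - 1 then K else 0)"
      if j: "j \<le> N - 1" for j
    proof -
      have "(\<Sum>t\<in>T. d (fst t) (snd t) * pochhammer (s t) j) = (\<Sum>k\<in>I. \<Sum>r<n k. d k r * pochhammer (\<beta> k + real r) j)"
        unfolding T_def s_def using finI by (subst sum.Sigma) (auto simp: split_beta)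
      also have "\<dots> = (if j = N - 1 then K else 0)" using j N1 by (intro E) simp
      finally show ?thesis .
    qed
    have t0: "(i, r) \<in> T" using iI' r by (simp add: T_def)
    have inj: "s t \<noteq> s (i, r)" if t: "t \<in> T" "t \<noteq> (i, r)" for t
    proof
      assume eq: "s t = s (i, r)"
      obtain k m where km: "t = (k, m)" by (cases t)
      have k: "k \<in> I" using t km by (simp add: T_def)
      show False
      proof (cases "k = i")
        case True
        then show False using eq t km by (simp add: s_def)
      next
        case False
        have "\<beta> k - \<beta> i = of_int (int r - int m)" using eq km by (simp add: s_def algebra_simps)
        hence "\<beta> k - \<beta> i \<in> \<int>" by (metis Ints_of_int)
        with bint[of k i] k iI' False show False by (simp add: I_def)
      qed
    qed
    show ?thesis
      using node_solve[where T=T and M="N - 1" and d="\<lambda>t. d (fst t) (snd t)" and s=s and K=K and tz="(i, r)",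
           OF finT cardT sysT t0 inj] by simp
  qed
  define J where "J = I - {i}"
  have finJ: "finite J" using finI by (simp add: J_def)
  have NJ: "N = n i + (\<Sum>k\<in>J. n k)" unfolding NI J_def using finI iI' by (simp add: sum.remove)
  define ks where "ks = filter (\<lambda>k. k \<noteq> i) [1..<p+1]"
  have dks: "distinct ks" by (simp add: ks_def)
  have sks: "set ks = J" by (auto simp: ks_def J_def I_def)
  define G where "G r = (\<Prod>t\<in>T-{(i,r)}. s (i,r) - s t)" for r
  define P1 where "P1 r = pochhammer (1 - real (n i)) r" for r
  define PR where "PR r = (\<Prod>k\<in>J. pochhammer (\<beta> i + 1 - \<beta> k - real (n k)) r)" for r
  define PS where "PS r = (\<Prod>k\<in>J. pochhammer (\<beta> i + 1 - \<beta> k) r)" for r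
  define PQ where "PQ = (\<Prod>k\<in>J. pochhammer (\<beta> k - \<beta> i) (n k))"
  have JI: "\<And>k. k \<in> J \<Longrightarrow> k \<in> {1..p} \<and> k \<noteq> i" by (simp add: J_def I_def)
  have hG: "G r * ((-1)^(N-1) * P1 r * PR r) = fact (n i - 1) * fact r * PQ * PS r" if r: "r < n i" for r
  proof -
    define G1 where "G1 = (\<Prod>r'\<in>{..<n i}-{r}. real r - real r')"
    define Gk where "Gk k = (\<Prod>m<n k. (\<beta> i - \<beta> k) + real r - real m)" for k
    have IJ: "I = insert i J" and iJ: "i \<notin> J" using iI' by (auto simp: J_def)
    have split: "T - {(i,r)} = Sigma {i} (\<lambda>_. {..<n i} - {r}) \<union> Sigma J (\<lambda>k. {..<n k})"
      unfolding T_def IJ using iJ by auto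
    have "G r = (\<Prod>t\<in>Sigma {i} (\<lambda>_. {..<n i} - {r}). s (i,r) - s t) * (\<Prod>t\<in>Sigma J (\<lambda>k. {..<n k}). s (i,r) - s t)"
      unfolding G_def split using iJ finJ by (intro prod.union_disjoint) auto
    also have "(\<Prod>t\<in>Sigma {i} (\<lambda>_. {..<n i} - {r}). s (i,r) - s t) = G1"
    proof -
      have "Sigma {i} (\<lambda>_. {..<n i} - {r}) = Pair i ` ({..<n i} - {r})" by auto
      hence "(\<Prod>t\<in>Sigma {i} (\<lambda>_. {..<n i} - {r}). s (i,r) - s t) = (\<Prod>r'\<in>{..<n i} - {r}. s (i,r) - s (i,r'))"
        by (simp add: prod.reindex inj_on_def)
      thus ?thesis unfolding G1_def by (simp add: s_def)
    qed
    also have "(\<Prod>t\<in>Sigma J (\<lambda>k. {..<n k}). s (i,r) - s t) = (\<Prod>k\<in>J. Gk k)"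
    proof -
      have "(\<Prod>k\<in>J. \<Prod>m<n k. s (i,r) - s (k,m)) = (\<Prod>(k,m)\<in>Sigma J (\<lambda>k. {..<n k}). s (i,r) - s (k,m))"
        using finJ by (intro prod.Sigma) auto
      also have "\<dots> = (\<Prod>t\<in>Sigma J (\<lambda>k. {..<n k}). s (i,r) - s t)" by (simp add: case_prod_eta)
      finally show ?thesis unfolding Gk_def
        by (auto simp: s_def algebra_simps intro!: prod.cong)
    qed
    finally have GG: "G r = G1 * (\<Prod>k\<in>J. Gk k)" .
    have i1: "G1 * P1 r * (-1)^(n i - 1) = fact (n i - 1) * fact r"
      unfolding G1_def P1_def by (rule G1_identity[OF r])
    have ik: "Gk k * pochhammer (\<beta> i + 1 - \<beta> k - real (n k)) r * (-1)^(n k)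
        = pochhammer (\<beta> k - \<beta> i) (n k) * pochhammer (\<beta> i + 1 - \<beta> k) r" for k
    proof -
      have e1: "\<beta> i - \<beta> k + 1 - real (n k) = \<beta> i + 1 - \<beta> k - real (n k)" by simp
      have e2: "- (\<beta> i - \<beta> k) = \<beta> k - \<beta> i" by simp
      have e3: "\<beta> i - \<beta> k + 1 = \<beta> i + 1 - \<beta> k" by simp
      show ?thesis using Gk_identity[where b="\<beta> i - \<beta> k" and n="n k" and r=r] unfolding Gk_def e1 e2 e3 .
    qed
    have "(\<Prod>k\<in>J. Gk k * pochhammer (\<beta> i + 1 - \<beta> k - real (n k)) r * (-1)^(n k))
        = (\<Prod>k\<in>J. pochhammer (\<beta> k - \<beta> i) (n k) * pochhammer (\<beta> i + 1 - \<beta> k) r)"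
      by (intro prod.cong refl ik)
    hence iJ': "(\<Prod>k\<in>J. Gk k) * PR r * (-1)^(\<Sum>k\<in>J. n k) = PQ * PS r"
      by (simp add: prod.distrib PR_def PQ_def PS_def power_sum)
    have sgn: "(-1::real)^(N-1) = (-1)^(n i - 1) * (-1)^(\<Sum>k\<in>J. n k)"
      using ni by (simp add: NJ power_add[symmetric])
    have "G r * ((-1)^(N-1) * P1 r * PR r)
        = (G1 * P1 r * (-1)^(n i - 1)) * ((\<Prod>k\<in>J. Gk k) * PR r * (-1)^(\<Sum>k\<in>J. n k))"
      unfolding GG sgn by (simp add: mult_ac)
    also have "\<dots> = fact (n i - 1) * fact r * PQ * PS r" unfolding i1 iJ' by (simp add: mult_ac)
    finally show ?thesis .
  qed
  have PQnz: "PQ \<noteq> 0"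
  proof -
    have "pochhammer (\<beta> k - \<beta> i) (n k) \<noteq> 0" if k: "k \<in> J" for k
    proof
      assume "pochhammer (\<beta> k - \<beta> i) (n k) = 0"
      then obtain m where "\<beta> k - \<beta> i = - real m" by (auto simp: pochhammer_eq_0_iff)
      hence "\<beta> k - \<beta> i \<in> \<int>" by (metis Ints_minus Ints_of_nat)
      with bint[of k i] JI[OF k] iI show False by auto
    qed
    thus ?thesis by (simp add: PQ_def finJ)
  qed
  have PSnz: "PS r \<noteq> 0" for r
  proof -
    have "pochhammer (\<beta> i + 1 - \<beta> k) r \<noteq> 0" if k: "k \<in> J" for k
    proof
      assume "pochhammer (\<beta> i + 1 - \<beta> k) r = 0"
      then obtain m where "\<beta> i + 1 - \<beta> k = - real m" by (auto simp: pochhammer_eq_0_iff)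
      hence "\<beta> i - \<beta> k = - real (Suc m)" by simp
      hence "\<beta> i - \<beta> k \<in> \<int>" by (metis Ints_minus Ints_of_nat)
      with bint[of i k] JI[OF k] iI show False by auto
    qed
    thus ?thesis by (simp add: PS_def finJ)
  qed
  have pbnz: "pochhammer (\<beta> i) r \<noteq> 0" for r
    using bpos[OF iI] by (auto simp: pochhammer_eq_0_iff)
  show ?thesis
  proof
    fix x :: real
    define u where "u = (1 - c) powr \<beta> i"
    define X where "X r = pochhammer (x + \<beta> i) r" for r
    define trm where "trm l = (prod_list (map (\<lambda>a. pochhammer a l) ([1 - real (n i)] @ map (\<lambda>k. \<beta> i + 1 - \<beta> k - real (n k)) ks @ [x + \<beta> i])))
        / (prod_list (map (\<lambda>b. pochhammer b l) (map (\<lambda>k. \<beta> i + 1 - \<beta> k) ks @ [\<beta> i]))) * (1-c)^l / fact l" for l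
    have lhs: "poly (A i) x = (\<Sum>r<n i. a i r * X r)" by (simp add: a[OF iI'] poly_sum poly_rfp X_def)
    have hyp: "hypergeomF ([1 - real (n i)] @ map (\<lambda>k. \<beta> i + 1 - \<beta> k - real (n k)) ks @ [x + \<beta> i])
          (map (\<lambda>k. \<beta> i + 1 - \<beta> k) ks @ [\<beta> i]) (1 - c) = (\<Sum>l<n i. trm l)"
    proof -
      have "trm l = 0" if l: "l \<notin> {..<n i}" for l
      proof -
        have "pochhammer (1 - real (n i)) l = 0"
          unfolding pochhammer_eq_0_iff using l ni by (intro exI[of _ "n i - 1"]) (auto simp: of_nat_diff)
        thus ?thesis by (simp add: trm_def)
      qed
      hence "suminf trm = (\<Sum>l<n i. trm l)" by (intro suminf_finite) auto
      moreover have "hypergeomF ([1 - real (n i)] @ map (\<lambda>k. \<beta> i + 1 - \<beta> k - real (n k)) ks @ [x + \<beta> i])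
          (map (\<lambda>k. \<beta> i + 1 - \<beta> k) ks @ [\<beta> i]) (1 - c) = suminf trm"
        unfolding hypergeomF_def trm_def by (rule refl)
      ultimately show ?thesis by simp
    qed
    have rhs: "meixner2_typeI p \<beta> c n i x =
        (-1) ^ (N - 1) * (1 - c) powr (\<beta> i + real N - 1)
          / (c ^ (N - 1) * fact (n i - 1) * PQ) * (\<Sum>l<n i. trm l)"
      unfolding meixner2_typeI_def Let_def N_def[symmetric] ks_def[symmetric] hyp
      by (simp add: PQ_def J_def I_def)
    have trm_eq: "trm r = P1 r * PR r * X r / (PS r * pochhammer (\<beta> i) r) * (1-c)^r / fact r" for r
      using dks sks
      by (simp add: trm_def P1_def PR_def PS_def X_def o_def prod.distinct_set_conv_list[symmetric] mult_ac)
    have pw: "(1 - c) powr (\<beta> i + real N - 1) = u * (1 - c)^(N - 1)"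
    proof -
      have "(1 - c) powr (\<beta> i + real N - 1) = (1 - c) powr (\<beta> i + real (N - 1))"
        using N1 by (simp add: of_nat_diff algebra_simps)
      also have "\<dots> = u * (1 - c)^(N - 1)" using c1 by (simp add: powr_add u_def powr_realpow)
      finally show ?thesis .
    qed
    have each: "a i r * X r = (-1) ^ (N - 1) * (u * (1 - c)^(N - 1)) / (c ^ (N - 1) * fact (n i - 1) * PQ) * trm r"
      if r: "r < n i" for r
    proof -
      have ha: "a i r = d i r * (u * (1-c)^r) / pochhammer (\<beta> i) r"
      proof -
        have c1': "0 < 1 - c" using c1 by simp
        have ur: "u * (1-c)^r = (1-c) powr (\<beta> i + r)"
          using c1' by (simp add: u_def powr_add powr_realpow)
        have "(1-c) powr (-(\<beta> i + r)) * (u * (1-c)^r) = (1-c) powr (-(\<beta> i + r) + (\<beta> i + r))"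
          unfolding ur by (rule powr_add[symmetric])
        also have "\<dots> = 1" using c1' by simp
        finally have "(1-c) powr (-(\<beta> i + r)) * (u * (1-c)^r) = 1" .
        thus ?thesis using pbnz[of r] by (simp add: d_def field_simps)
      qed
      show ?thesis unfolding trm_eq
        by (rule final_alg[OF hd[OF r, folded G_def] ha K_def hG[OF r] pbnz _ _ PQnz PSnz c0 c1]) auto
    qed
    show "poly (A i) x = meixner2_typeI p \<beta> c n i x"
      unfolding lhs rhs pw sum_distrib_left by (intro sum.cong refl) (simp add: each)
  qed
qed

end
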